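(* Under the setting of the context, suppose $\lambda\mapsto q_\lambda$ is differentiable at $\lambda=0$, $f_0,f_1$ are continuous at $q_0$, and $p_0f_0(q_0)+p_1f_1(q_0)>0$. Then $$\frac{dq_\lambda}{d\lambda}\Big|_{\lambda=0}=\frac{p_1f_1(q_0)}{p_0f_0(q_0)+p_1f_1(q_0)}.$$
   Context: $(X,Y)$ is a random pair on $\mathcal{X}\times[C]$. A classifier gives predicted class $\hat y(x)\in[C]$; a map $g:[C]\to[G]$ partitions classes into groups; $d(y,y'):=\mathbb{I}\{g(y)\ne g(y')\}$. For a score $s(x,y)$ and $\lambda\ge0$, $s_\lambda(x,y):=s(x,y)+\lambda d(y,\hat y(x))$. $\mathcal{Y}_0(x):=\{y: d(y,\hat y(x))=0\}$, $\mathcal{Y}_1(x):=\{y:d(y,\hat y(x))\ne0\}$; $p_0:=\mathbb{P}(Y\in\mathcal{Y}_0(X))\in(0,1)$, $p_1:=1-p_0$; $F_z(t):=\mathbb{P}(s(X,Y)\le t\mid Y\in\mathcal{Y}_z(X))$ for $z\in\{0,1\}$, assumed absolutely continuous with density $f_z=F_z'$. For small $\lambda\ge 0$, $q_\lambda$ satisfies $\mathbb{P}(s_\lambda(X,Y)\le q_\lambda)=1-\alpha$ for a fixed $\alpha\in(0,1)$. *)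

theory Defs
  imports "HOL-Probability.Probability"
begin

definition dgrp :: "(nat \<Rightarrow> nat) \<Rightarrow> nat \<Rightarrow> nat \<Rightarrow> real" where
  "dgrp g y y' = (if g y \<noteq> g y' then 1 else 0)"

definition slam :: "('x \<Rightarrow> nat \<Rightarrow> real) \<Rightarrow> ('x \<Rightarrow> nat) \<Rightarrow> (nat \<Rightarrow> nat) \<Rightarrow> real \<Rightarrow> 'x \<Rightarrow> nat \<Rightarrow> real" where
  "slam s yhat g lam x y = s x y + lam * dgrp g y (yhat x)"

definition Yset :: "nat \<Rightarrow> ('x \<Rightarrow> nat) \<Rightarrow> (nat \<Rightarrow> nat) \<Rightarrow> nat \<Rightarrow> 'x \<Rightarrow> nat set" where
  "Yset C yhat g z x = (if z = 0 then {y \<in> {1..C}. dgrp g y (yhat x) = 0}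
                                 else {y \<in> {1..C}. dgrp g y (yhat x) \<noteq> 0})"

definition Zev :: "'a measure \<Rightarrow> ('a \<Rightarrow> 'x) \<Rightarrow> ('a \<Rightarrow> nat) \<Rightarrow> nat \<Rightarrow> ('x \<Rightarrow> nat) \<Rightarrow> (nat \<Rightarrow> nat) \<Rightarrow> nat \<Rightarrow> 'a set" where
  "Zev M X Y C yhat g z = {\<omega> \<in> space M. Y \<omega> \<in> Yset C yhat g z (X \<omega>)}"

definition condF :: "'a measure \<Rightarrow> ('a \<Rightarrow> 'x) \<Rightarrow> ('a \<Rightarrow> nat) \<Rightarrow> nat \<Rightarrow> ('x \<Rightarrow> nat \<Rightarrow> real) \<Rightarrow> ('x \<Rightarrow> nat) \<Rightarrow> (nat \<Rightarrow> nat) \<Rightarrow> nat \<Rightarrow> real \<Rightarrow> real" where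
  "condF M X Y C s yhat g z t =
     measure M ({\<omega> \<in> space M. s (X \<omega>) (Y \<omega>) \<le> t} \<inter> Zev M X Y C yhat g z)
     / measure M (Zev M X Y C yhat g z)"

end

theory Submission
  imports Defs
begin

lemma Phi_deriv:
  fixes f :: "real \<Rightarrow> real"
  assumes int: "integrable lborel f" and fm: "f \<in> borel_measurable lborel" and c: "isCont f a"
  shows "((\<lambda>t. LINT x:{..t}|lborel. f x) has_real_derivative f a) (at a)"
proof -
  define c where "c = a - 1"
  define b where "b = a + 1"
  have si: "set_integrable lborel A f" if "A \<in> sets lborel" for A
    unfolding set_integrable_def using integrable_mult_indicator[OF that int] .
  have fi: "f integrable_on {c..b}"
    using set_borel_integral_eq_integral(1)[OF si] by simp
  have "((\<lambda>u. integral {c..u} f) has_vector_derivative f a) (at a within ({c..b} - {}))"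
    by (rule integral_has_vector_derivative_continuous_at[OF fi])
       (use c in \<open>auto simp: c_def b_def continuous_at_imp_continuous_within isCont_def continuous_at\<close>)
  moreover have ai: "a \<in> interior {c..b}" by (simp add: c_def b_def)
  hence "at a within ({c..b} - {}) = at a" using at_within_interior[OF ai] by simp
  ultimately have d: "((\<lambda>u. integral {c..u} f) has_real_derivative f a) (at a)"
    unfolding has_real_derivative_iff_has_vector_derivative by metis
  have "((\<lambda>u. (LINT x:{..<c}|lborel. f x) + integral {c..u} f) has_real_derivative f a) (at a)"
    using DERIV_add[OF DERIV_const d] by simp
  then show ?thesis
  proof (rule has_field_derivative_transform_within_open[where S="{c<..}"])
    show "open {c<..}" by simp
    show "a \<in> {c<..}" by (simp add: c_def)
    fix t assume "t \<in> {c<..}"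
    then have "{..t} = {..<c} \<union> {c..t}" "{..<c} \<inter> {c..t} = {}" by auto
    then show "(LINT x:{..<c}|lborel. f x) + integral {c..t} f = (LINT x:{..t}|lborel. f x)"
      using set_integral_Un[of "{..<c}" "{c..t}" lborel f] si
        set_borel_integral_eq_integral(2)[OF si[of "{c..t}"]] by simp
  qed
qed

lemma deriv_unique_right:
  fixes f :: "real \<Rightarrow> real"
  assumes "(f has_real_derivative a) (at 0 within {0..})" "(f has_real_derivative b) (at 0 within {0..})"
  shows "a = b"
proof -
  have "((\<lambda>y. (f y - f 0) / (y - 0)) \<longlongrightarrow> a) (at_right 0)"
       "((\<lambda>y. (f y - f 0) / (y - 0)) \<longlongrightarrow> b) (at_right 0)"
    using assms by (simp_all add: has_field_derivative_iff at_within_Ici_at_right)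
  then show ?thesis using tendsto_unique trivial_limit_at_right_real by blast
qed

theorem mainTheorem7:
  fixes M :: "'a measure" and N :: "'x measure"
    and X :: "'a \<Rightarrow> 'x" and Y :: "'a \<Rightarrow> nat"
    and C G :: nat and yhat :: "'x \<Rightarrow> nat" and g :: "nat \<Rightarrow> nat"
    and s :: "'x \<Rightarrow> nat \<Rightarrow> real" and \<alpha> :: real
    and f0 f1 :: "real \<Rightarrow> real" and q :: "real \<Rightarrow> real"
  assumes PS: "prob_space M"
    and Xm: "X \<in> measurable M N"
    and Ym: "Y \<in> measurable M (count_space UNIV)"
    and Yr: "\<And>\<omega>. \<omega> \<in> space M \<Longrightarrow> Y \<omega> \<in> {1..C}"
    and yhm: "yhat \<in> measurable N (count_space UNIV)"
    and "\<And>x. x \<in> space N \<Longrightarrow> yhat x \<in> {1..C}"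
    and "\<And>y. y \<in> {1..C} \<Longrightarrow> g y \<in> {1..G}"
    and sprod: "(\<lambda>(x, y). s x y) \<in> borel_measurable (N \<Otimes>\<^sub>M count_space UNIV)"
    and p0_pos: "0 < measure M (Zev M X Y C yhat g 0)"
    and p0_lt1: "measure M (Zev M X Y C yhat g 0) < 1"
    and "0 < \<alpha>" and "\<alpha> < 1"
    \<comment> \<open>F_z absolutely continuous with density f_z\<close>
    and "\<And>x. 0 \<le> f0 x" and "\<And>x. 0 \<le> f1 x"
    and f0m: "f0 \<in> borel_measurable lborel" and f1m: "f1 \<in> borel_measurable lborel"
    and f0i: "integrable lborel f0" and f1i: "integrable lborel f1"
    and F0: "\<And>t. condF M X Y C s yhat g 0 t = (LINT x:{..t}|lborel. f0 x)"
    and F1: "\<And>t. condF M X Y C s yhat g 1 t = (LINT x:{..t}|lborel. f1 x)"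
    \<comment> \<open>q_lambda defined for small lambda \<ge> 0\<close>
    and qdef: "\<exists>\<epsilon>>0. \<forall>lam. 0 \<le> lam \<and> lam < \<epsilon> \<longrightarrow>
           measure M {\<omega> \<in> space M. slam s yhat g lam (X \<omega>) (Y \<omega>) \<le> q lam} = 1 - \<alpha>"
    and qd: "q differentiable (at 0 within {0..})"
    and c0: "isCont f0 (q 0)" and c1: "isCont f1 (q 0)"
    and pos: "measure M (Zev M X Y C yhat g 0) * f0 (q 0)
           + measure M (Zev M X Y C yhat g 1) * f1 (q 0) > 0"
  shows "(q has_real_derivative
            (measure M (Zev M X Y C yhat g 1) * f1 (q 0) /
             (measure M (Zev M X Y C yhat g 0) * f0 (q 0)
              + measure M (Zev M X Y C yhat g 1) * f1 (q 0))))
         (at 0 within {0..})"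
proof -
  interpret prob_space M by (rule PS)
  define Z0 where "Z0 = Zev M X Y C yhat g 0"
  define Z1 where "Z1 = Zev M X Y C yhat g 1"
  define p0 where "p0 = measure M Z0"
  define p1 where "p1 = measure M Z1"
  define \<Phi>0 where "\<Phi>0 = (\<lambda>t. LINT x:{..t}|lborel. f0 x)"
  define \<Phi>1 where "\<Phi>1 = (\<lambda>t. LINT x:{..t}|lborel. f1 x)"
  define d where "d = (\<lambda>\<omega>. dgrp g (Y \<omega>) (yhat (X \<omega>)))"
  define A where "A = (\<lambda>t. {\<omega> \<in> space M. s (X \<omega>) (Y \<omega>) \<le> t})"
  have yx: "(\<lambda>\<omega>. yhat (X \<omega>)) \<in> measurable M (count_space UNIV)"
    by (rule measurable_compose[OF Xm yhm])
  have dm: "d \<in> borel_measurable M"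
    unfolding d_def
  proof (rule measurable_compose_countable[where g=Y and f="\<lambda>i \<omega>. dgrp g i (yhat (X \<omega>))", OF _ Ym])
    fix i
    show "(\<lambda>\<omega>. dgrp g i (yhat (X \<omega>))) \<in> borel_measurable M"
      by (rule measurable_compose_countable[where g="\<lambda>\<omega>. yhat (X \<omega>)" and f="\<lambda>j \<omega>. dgrp g i j", OF _ yx]) simp
  qed
  have sm: "(\<lambda>\<omega>. s (X \<omega>) (Y \<omega>)) \<in> borel_measurable M"
    using measurable_compose[OF measurable_Pair[OF Xm Ym] sprod] by simp
  have Z0e: "Z0 = {\<omega> \<in> space M. d \<omega> = 0}"
    unfolding Z0_def Zev_def Yset_def d_def using Yr by auto
  have Z1e: "Z1 = {\<omega> \<in> space M. d \<omega> \<noteq> 0}"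
    unfolding Z1_def Zev_def Yset_def d_def using Yr by auto
  have Z0s: "Z0 \<in> sets M" unfolding Z0e using dm by measurable
  have Z1s: "Z1 \<in> sets M" unfolding Z1e using dm by measurable
  have As: "A t \<in> sets M" for t unfolding A_def using sm by measurable
  have Z1c: "Z1 = space M - Z0" unfolding Z0e Z1e by auto
  have p1e: "p1 = 1 - p0" unfolding p1_def p0_def Z1c using prob_compl[OF Z0s] .
  have p0pos: "0 < p0" using p0_pos unfolding p0_def Z0_def .
  have p1pos: "0 < p1" using p0_lt1 p1e unfolding p0_def Z0_def by simp
  have m0: "measure M (A t \<inter> Z0) = p0 * \<Phi>0 t" for t
    using F0[of t] p0pos unfolding condF_def \<Phi>0_def p0_def Z0_def A_def by (simp add: field_simps)
  have m1: "measure M (A t \<inter> Z1) = p1 * \<Phi>1 t" for t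
    using F1[of t] p1pos unfolding condF_def \<Phi>1_def p1_def Z1_def A_def by (simp add: field_simps)
  have split: "measure M {\<omega> \<in> space M. slam s yhat g lam (X \<omega>) (Y \<omega>) \<le> u}
      = p0 * \<Phi>0 u + p1 * \<Phi>1 (u - lam)" for lam u
  proof -
    have "{\<omega> \<in> space M. slam s yhat g lam (X \<omega>) (Y \<omega>) \<le> u} = (A u \<inter> Z0) \<union> (A (u - lam) \<inter> Z1)"
      unfolding slam_def A_def Z0e Z1e d_def by (auto simp: dgrp_def split: if_splits)
    moreover have "measure M ((A u \<inter> Z0) \<union> (A (u - lam) \<inter> Z1)) = measure M (A u \<inter> Z0) + measure M (A (u - lam) \<inter> Z1)"
      by (rule finite_measure_Union) (use As Z0s Z1s Z1c in auto)
    ultimately show ?thesis using m0 m1 by simp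
  qed
  obtain \<epsilon> where ep: "\<epsilon> > 0" and qe: "\<And>lam. 0 \<le> lam \<Longrightarrow> lam < \<epsilon> \<Longrightarrow>
      p0 * \<Phi>0 (q lam) + p1 * \<Phi>1 (q lam - lam) = 1 - \<alpha>"
    using qdef split by metis
  obtain D where qD: "(q has_real_derivative D) (at 0 within {0..})"
    using qd real_differentiable_def by blast
  have d0: "(\<Phi>0 has_real_derivative f0 (q 0)) (at (q 0))"
    unfolding \<Phi>0_def by (rule Phi_deriv[OF f0i f0m c0])
  have d1: "(\<Phi>1 has_real_derivative f1 (q 0)) (at (q 0 - 0))"
    unfolding \<Phi>1_def using Phi_deriv[OF f1i f1m c1] by simp
  have qD1: "((\<lambda>lam. q lam - lam) has_real_derivative D - 1) (at 0 within {0..})"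
    by (intro derivative_intros qD)
  have H1: "((\<lambda>lam. p0 * \<Phi>0 (q lam) + p1 * \<Phi>1 (q lam - lam)) has_real_derivative
      p0 * (f0 (q 0) * D) + p1 * (f1 (q 0) * (D - 1))) (at 0 within {0..})"
    by (intro DERIV_add DERIV_cmult DERIV_chain2[OF d0 qD] DERIV_chain2[OF d1 qD1])
  have H2: "((\<lambda>lam. p0 * \<Phi>0 (q lam) + p1 * \<Phi>1 (q lam - lam)) has_real_derivative 0) (at 0 within {0..})"
    by (rule has_field_derivative_transform_within[OF DERIV_const ep]) (auto simp: qe)
  have "p0 * (f0 (q 0) * D) + p1 * (f1 (q 0) * (D - 1)) = 0"
    using deriv_unique_right[OF H1 H2] .
  moreover have "p0 * f0 (q 0) + p1 * f1 (q 0) > 0" using pos unfolding p0_def p1_def Z0_def Z1_def .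
  ultimately have "D = p1 * f1 (q 0) / (p0 * f0 (q 0) + p1 * f1 (q 0))"
    by (simp add: field_simps)
  then show ?thesis using qD unfolding p0_def p1_def Z0_def Z1_def by simp
qed

end
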